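(* Let $\mathfrak p,\mathfrak p'$ be U-matroid polyhedra. Then $\mathfrak p'$ is a sheared polyhedron of $\mathfrak p$ (i.e. $\mathfrak p'\subseteq\mathfrak p$ and every vertex of $\mathfrak p$ is a vertex of $\mathfrak p'$) if and only if $\mathfrak p$ is the Minkowski sum $\mathfrak p'+\mathrm{rec}(\mathfrak p)$, where $\mathrm{rec}(\mathfrak p)=\{\mathbf{y}:\mathbf{x}+\mathbf{y}\in\mathfrak p\ \forall\mathbf{x}\in\mathfrak p\}$ is the recession cone of $\mathfrak p$.
   Context: A U-matroid polyhedron is a polyhedron $\mathfrak p\subset\mathbb{R}^n$ with at least one vertex, all of whose vertices are 0,1-vectors, and each of whose 1-dimensional faces (bounded edges or rays) is parallel to a difference of two standard basis vectors; equivalently, the base polyhedron $\{\mathbf{x}:\mathbf{x}(A)\le\rho(A)\ \forall A\in\mathcal{D},\ \mathbf{x}(E)=\rho(E)\}$ of a U-matroid $(E,\mathcal{D},\rho)$. *)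

theory Defs
  imports "HOL-Analysis.Analysis"
begin

definition unit_vec :: "'n::finite \<Rightarrow> real^'n" where
  "unit_vec i = axis i 1"

definition parallel_to_root :: "(real^'n::finite) set \<Rightarrow> bool" where
  "parallel_to_root F \<longleftrightarrow>
     (\<exists>i j. i \<noteq> j \<and> (\<forall>x\<in>F. \<forall>y\<in>F. \<exists>t::real. y - x = t *\<^sub>R (unit_vec i - unit_vec j)))"

definition U_matroid_polyhedron :: "(real^'n::finite) set \<Rightarrow> bool" where
  "U_matroid_polyhedron P \<longleftrightarrow>
     polyhedron P \<and>
     (\<exists>v. v extreme_point_of P) \<and>
     (\<forall>v. v extreme_point_of P \<longrightarrow> (\<forall>i. v $ i = 0 \<or> v $ i = 1)) \<and>
     (\<forall>F. F face_of P \<and> aff_dim F = 1 \<longrightarrow> parallel_to_root F)"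

definition recession_cone :: "(real^'n::finite) set \<Rightarrow> (real^'n) set" where
  "recession_cone P = {y. \<forall>x\<in>P. x + y \<in> P}"

definition sheared_polyhedron_of :: "(real^'n::finite) set \<Rightarrow> (real^'n) set \<Rightarrow> bool" where
  "sheared_polyhedron_of P' P \<longleftrightarrow>
     P' \<subseteq> P \<and> (\<forall>v. v extreme_point_of P \<longrightarrow> v extreme_point_of P')"

end

theory Submission
  imports Defs
begin

lemma step_lemma:
  fixes C :: "('a::euclidean_space \<times> real) set"
  assumes fin: "finite C" and xP: "\<forall>p\<in>C. fst p \<bullet> x \<le> snd p"
    and tight: "\<forall>p\<in>C. fst p \<bullet> x = snd p \<longrightarrow> fst p \<bullet> d = 0"
    and ex: "\<exists>p\<in>C. fst p \<bullet> d > 0"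
  shows "\<exists>t>0. (\<forall>p\<in>C. fst p \<bullet> (x + t *\<^sub>R d) \<le> snd p) \<and>
     {p\<in>C. fst p \<bullet> x = snd p} \<subset> {p\<in>C. fst p \<bullet> (x + t *\<^sub>R d) = snd p}"
proof -
  define S where "S = {p\<in>C. fst p \<bullet> d > 0}"
  define f where "f p = (snd p - fst p \<bullet> x) / (fst p \<bullet> d)" for p
  have finS: "finite (f ` S)" using fin by (simp add: S_def)
  have neS: "f ` S \<noteq> {}" using ex by (auto simp: S_def)
  define t where "t = Min (f ` S)"
  obtain q where q: "q \<in> S" "f q = t" using Min_in[OF finS neS] unfolding t_def by (metis imageE)
  have tle: "t \<le> f p" if "p \<in> S" for p using Min_le[OF finS] that unfolding t_def by blast
  have fpos: "f p > 0" if "p \<in> S" for p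
  proof -
    have "p \<in> C" "fst p \<bullet> d > 0" using that by (auto simp: S_def)
    then have "fst p \<bullet> x < snd p" using xP tight by force
    then show ?thesis using \<open>fst p \<bullet> d > 0\<close> by (simp add: f_def)
  qed
  have tpos: "t > 0" using fpos[OF q(1)] q(2) by simp
  have feas: "\<forall>p\<in>C. fst p \<bullet> (x + t *\<^sub>R d) \<le> snd p"
  proof
    fix p assume p: "p \<in> C"
    show "fst p \<bullet> (x + t *\<^sub>R d) \<le> snd p"
    proof (cases "fst p \<bullet> d > 0")
      case True
      then have "p \<in> S" using p by (simp add: S_def)
      then have "t \<le> f p" by (rule tle)
      then have "t * (fst p \<bullet> d) \<le> f p * (fst p \<bullet> d)" using True by (simp add: mult_right_mono)
      also have "\<dots> = snd p - fst p \<bullet> x" using True by (simp add: f_def)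
      finally show ?thesis by (simp add: inner_add_right)
    next
      case False
      then have "t * (fst p \<bullet> d) \<le> 0" using tpos by (simp add: mult_nonneg_nonpos)
      moreover have "fst p \<bullet> x \<le> snd p" using xP p by blast
      ultimately show ?thesis by (simp add: inner_add_right)
    qed
  qed
  have sub: "{p\<in>C. fst p \<bullet> x = snd p} \<subseteq> {p\<in>C. fst p \<bullet> (x + t *\<^sub>R d) = snd p}"
    using tight by (auto simp: inner_add_right)
  have qC: "q \<in> C" "fst q \<bullet> d > 0" using q by (auto simp: S_def)
  have "fst q \<bullet> (x + t *\<^sub>R d) = snd q"
    using qC q(2)[symmetric] by (simp add: inner_add_right f_def)
  moreover have "fst q \<bullet> x \<noteq> snd q" using qC tight by force
  ultimately have "q \<in> {p\<in>C. fst p \<bullet> (x + t *\<^sub>R d) = snd p} - {p\<in>C. fst p \<bullet> x = snd p}"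
    using qC by auto
  then show ?thesis using tpos feas sub by blast
qed

lemma decomp_lemma:
  fixes C :: "('a::euclidean_space \<times> real) set"
  assumes fin: "finite C" and P: "P = {x. \<forall>p\<in>C. fst p \<bullet> x \<le> snd p}"
    and v: "v extreme_point_of P"
  shows "x \<in> P \<Longrightarrow> \<exists>c y. x = c + y \<and> c \<in> convex hull {v. v extreme_point_of P}
            \<and> (\<forall>p\<in>C. fst p \<bullet> y \<le> 0)"
proof (induction x rule: measure_induct_rule[where f="\<lambda>x. card C - card {p\<in>C. fst p \<bullet> x = snd p}"])
  case (less x)
  define T where "T z = {p\<in>C. fst p \<bullet> z = snd p}" for z
  have xP: "\<forall>p\<in>C. fst p \<bullet> x \<le> snd p" using less.prems P by auto
  have IH: "\<exists>c y. z = c + y \<and> c \<in> convex hull {v. v extreme_point_of P} \<and> (\<forall>p\<in>C. fst p \<bullet> y \<le> 0)"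
    if "\<forall>p\<in>C. fst p \<bullet> z \<le> snd p" "T x \<subset> T z" for z
  proof -
    have "T z \<subseteq> C" by (auto simp: T_def)
    then have "card (T x) < card (T z)" "card (T z) \<le> card C"
      using that(2) fin by (auto intro: psubset_card_mono card_mono finite_subset)
    then have "card C - card (T z) < card C - card (T x)" by linarith
    then show ?thesis using less.IH[of z] that(1) P unfolding T_def by auto
  qed
  show ?case
  proof (cases "\<exists>d. d \<noteq> 0 \<and> (\<forall>p\<in>C. fst p \<bullet> x = snd p \<longrightarrow> fst p \<bullet> d = 0)")
    case False
    have "x extreme_point_of P"
      unfolding extreme_point_of_def
    proof (intro conjI ballI notI)
      show "x \<in> P" by (rule less.prems)
      fix u w assume uP: "u \<in> P" and wP: "w \<in> P" and xs: "x \<in> open_segment u w"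
      then obtain s where uw: "u \<noteq> w" and s: "0 < s" "s < 1" and xe: "x = (1 - s) *\<^sub>R u + s *\<^sub>R w"
        by (auto simp: in_segment)
      have "\<forall>p\<in>C. fst p \<bullet> x = snd p \<longrightarrow> fst p \<bullet> (w - u) = 0"
      proof (intro ballI impI)
        fix p assume pC: "p \<in> C" and eq: "fst p \<bullet> x = snd p"
        have a: "fst p \<bullet> u \<le> snd p" "fst p \<bullet> w \<le> snd p" using uP wP pC P by auto
        have b: "(1 - s) * (fst p \<bullet> u) + s * (fst p \<bullet> w) = snd p"
          using eq xe by (simp add: inner_add_right)
        have c1: "fst p \<bullet> u = snd p"
        proof (rule ccontr)
          assume "fst p \<bullet> u \<noteq> snd p"
          then have "(1 - s) * (fst p \<bullet> u) < (1 - s) * snd p" using a s by auto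
          moreover have "s * (fst p \<bullet> w) \<le> s * snd p" using a s by (simp add: mult_left_mono)
          ultimately show False using b by (simp add: algebra_simps)
        qed
        have c2: "fst p \<bullet> w = snd p"
        proof (rule ccontr)
          assume "fst p \<bullet> w \<noteq> snd p"
          then have "s * (fst p \<bullet> w) < s * snd p" using a s by auto
          moreover have "(1 - s) * (fst p \<bullet> u) \<le> (1 - s) * snd p" using a s by (simp add: mult_left_mono)
          ultimately show False using b by (simp add: algebra_simps)
        qed
        show "fst p \<bullet> (w - u) = 0" using c1 c2 by (simp add: inner_diff_right)
      qed
      moreover have "w - u \<noteq> 0" using uw by simp
      ultimately show False using False by blast
    qed
    then have "x \<in> convex hull {v. v extreme_point_of P}" by (simp add: hull_inc)
    then show ?thesis by (intro exI[of _ x] exI[of _ 0]) auto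
  next
    case True
    then obtain d where d0: "d \<noteq> 0" and dt: "\<forall>p\<in>C. fst p \<bullet> x = snd p \<longrightarrow> fst p \<bullet> d = 0" by blast
    have dt': "\<forall>p\<in>C. fst p \<bullet> x = snd p \<longrightarrow> fst p \<bullet> (-d) = 0" using dt by simp
    have nz: "\<exists>p\<in>C. fst p \<bullet> d \<noteq> 0"
    proof (rule ccontr)
      assume "\<not> ?thesis"
      then have z: "\<forall>p\<in>C. fst p \<bullet> d = 0" by blast
      have vP: "v \<in> P" using v by (simp add: extreme_point_of_def)
      have mem: "v - d \<in> P" "v + d \<in> P" using vP z P by (auto simp: inner_diff_right inner_add_right)
      have nd: "- d \<noteq> d"
      proof
        assume "- d = d"
        then have "(2::real) *\<^sub>R d = 0" by (metis add.left_inverse scaleR_2)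
        then show False using d0 by simp
      qed
      moreover have "v \<in> open_segment (v - d) (v + d)"
        using midpoint_in_open_segment[of "v - d" "v + d"] nd
        by (simp add: midpoint_def scaleR_add_right[symmetric])
      ultimately show False using v mem by (auto simp: extreme_point_of_def)
    qed
    show ?thesis
    proof (cases "\<exists>p\<in>C. fst p \<bullet> d > 0")
      case pos: True
      obtain t where t: "t > 0" "\<forall>p\<in>C. fst p \<bullet> (x + t *\<^sub>R d) \<le> snd p"
        "T x \<subset> T (x + t *\<^sub>R d)"
        using step_lemma[OF fin xP dt pos] unfolding T_def by blast
      obtain c1 y1 where cy1: "x + t *\<^sub>R d = c1 + y1" "c1 \<in> convex hull {v. v extreme_point_of P}"
        "\<forall>p\<in>C. fst p \<bullet> y1 \<le> 0" using IH[OF t(2,3)] by blast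
      show ?thesis
      proof (cases "\<exists>p\<in>C. fst p \<bullet> d < 0")
        case neg: True
        have pos': "\<exists>p\<in>C. fst p \<bullet> (-d) > 0" using neg by auto
        obtain s where s: "s > 0" "\<forall>p\<in>C. fst p \<bullet> (x + s *\<^sub>R (-d)) \<le> snd p"
          "T x \<subset> T (x + s *\<^sub>R (-d))"
          using step_lemma[OF fin xP dt' pos'] unfolding T_def by blast
        obtain c2 y2 where cy2: "x + s *\<^sub>R (-d) = c2 + y2" "c2 \<in> convex hull {v. v extreme_point_of P}"
          "\<forall>p\<in>C. fst p \<bullet> y2 \<le> 0" using IH[OF s(2,3)] by blast
        define l where "l = s / (s + t)"
        have l: "0 \<le> l" "l \<le> 1" "1 - l = t / (s + t)" using s t by (auto simp: l_def field_simps)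
        have xeq: "x = l *\<^sub>R (x + t *\<^sub>R d) + (1 - l) *\<^sub>R (x + s *\<^sub>R (-d))"
        proof -
          have "l *\<^sub>R (x + t *\<^sub>R d) + (1 - l) *\<^sub>R (x + s *\<^sub>R (-d))
              = x + (l * t - (1 - l) * s) *\<^sub>R d" by (simp add: algebra_simps)
          also have "l * t - (1 - l) * s = 0" using l(3) s t by (simp add: l_def field_simps)
          finally show ?thesis by simp
        qed
        have "x = (l *\<^sub>R c1 + (1 - l) *\<^sub>R c2) + (l *\<^sub>R y1 + (1 - l) *\<^sub>R y2)"
          using xeq cy1(1) cy2(1) by (simp add: algebra_simps)
        moreover have "l *\<^sub>R c1 + (1 - l) *\<^sub>R c2 \<in> convex hull {v. v extreme_point_of P}"
          using cy1(2) cy2(2) l(1,2) convex_convex_hull by (metis convexD diff_add_cancel diff_ge_0_iff_ge add.commute)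
        moreover have "\<forall>p\<in>C. fst p \<bullet> (l *\<^sub>R y1 + (1 - l) *\<^sub>R y2) \<le> 0"
        proof
          fix p assume "p \<in> C"
          then have "fst p \<bullet> y1 \<le> 0" "fst p \<bullet> y2 \<le> 0" using cy1 cy2 by auto
          then have "l * (fst p \<bullet> y1) \<le> 0" "(1 - l) * (fst p \<bullet> y2) \<le> 0"
            using l(1,2) by (simp_all add: mult_nonneg_nonpos del: l(3))
          then show "fst p \<bullet> (l *\<^sub>R y1 + (1 - l) *\<^sub>R y2) \<le> 0" by (simp add: inner_add_right)
        qed
        ultimately show ?thesis by blast
      next
        case False
        have "x = c1 + (y1 - t *\<^sub>R d)" using cy1(1) by (simp add: algebra_simps)
        moreover have "\<forall>p\<in>C. fst p \<bullet> (y1 - t *\<^sub>R d) \<le> 0"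
        proof
          fix p assume p: "p \<in> C"
          then have "fst p \<bullet> d \<ge> 0" using False by force
          then have "t * (fst p \<bullet> d) \<ge> 0" using t by simp
          then show "fst p \<bullet> (y1 - t *\<^sub>R d) \<le> 0" using bspec[OF cy1(3) p] by (simp add: inner_diff_right)
        qed
        ultimately show ?thesis using cy1(2) by blast
      qed
    next
      case False
      then have allle: "\<forall>p\<in>C. fst p \<bullet> d \<le> 0" by force
      have pos': "\<exists>p\<in>C. fst p \<bullet> (-d) > 0" using nz allle by force
      obtain s where s: "s > 0" "\<forall>p\<in>C. fst p \<bullet> (x + s *\<^sub>R (-d)) \<le> snd p"
        "T x \<subset> T (x + s *\<^sub>R (-d))"
        using step_lemma[OF fin xP dt' pos'] unfolding T_def by blast
      obtain c2 y2 where cy2: "x + s *\<^sub>R (-d) = c2 + y2" "c2 \<in> convex hull {v. v extreme_point_of P}"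
        "\<forall>p\<in>C. fst p \<bullet> y2 \<le> 0" using IH[OF s(2,3)] by blast
      have "x = c2 + (y2 + s *\<^sub>R d)" using cy2(1) by (simp add: algebra_simps)
      moreover have "\<forall>p\<in>C. fst p \<bullet> (y2 + s *\<^sub>R d) \<le> 0"
      proof
        fix p assume p: "p \<in> C"
        then have "s * (fst p \<bullet> d) \<le> 0" using allle s by (simp add: mult_nonneg_nonpos)
        then show "fst p \<bullet> (y2 + s *\<^sub>R d) \<le> 0" using bspec[OF cy2(3) p] by (simp add: inner_add_right)
      qed
      ultimately show ?thesis using cy2(2) by blast
    qed
  qed
qed

lemma polyhedron_constraints:
  fixes P :: "'a::euclidean_space set"
  assumes "polyhedron P"
  obtains C :: "('a \<times> real) set" where "finite C" "P = {x. \<forall>p\<in>C. fst p \<bullet> x \<le> snd p}"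
proof -
  obtain F where F: "finite F" "P = \<Inter>F" "\<forall>h\<in>F. \<exists>a b. a \<noteq> 0 \<and> h = {x. a \<bullet> x \<le> b}"
    using assms unfolding polyhedron_def by blast
  define g where "g h = (SOME p. h = {x. fst p \<bullet> x \<le> snd p})" for h :: "'a set"
  have g: "h = {x. fst (g h) \<bullet> x \<le> snd (g h)}" if hF: "h \<in> F" for h
  proof -
    obtain a b where "a \<noteq> 0 \<and> h = {x. a \<bullet> x \<le> b}" using bspec[OF F(3) hF] by (elim exE) iprover
    then have "\<exists>p. h = {x. fst p \<bullet> x \<le> snd p}" by (intro exI[of _ "(a,b)"]) (simp only: fst_conv snd_conv)
    then show ?thesis unfolding g_def by (rule someI_ex)
  qed
  have "P = {x. \<forall>p\<in>g ` F. fst p \<bullet> x \<le> snd p}"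
  proof -
    have gm: "x \<in> h \<longleftrightarrow> fst (g h) \<bullet> x \<le> snd (g h)" if "h \<in> F" for h x
    proof -
      have "x \<in> h \<longleftrightarrow> x \<in> {x. fst (g h) \<bullet> x \<le> snd (g h)}"
        using g[OF that] by (rule arg_cong)
      then show ?thesis by (simp only: mem_Collect_eq)
    qed
    have "x \<in> \<Inter>F \<longleftrightarrow> (\<forall>h\<in>F. fst (g h) \<bullet> x \<le> snd (g h))" for x
      using gm by (simp only: Inter_iff) blast
    then have "x \<in> P \<longleftrightarrow> (\<forall>p\<in>g ` F. fst p \<bullet> x \<le> snd p)" for x
      unfolding F(2) by (simp only: Set.ball_simps)
    then show ?thesis by (intro set_eqI) (simp only: mem_Collect_eq)
  qed
  moreover have "finite (g ` F)" using F(1) by simp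
  ultimately show ?thesis using that by blast
qed

theorem proposition4p6:
  fixes P P' :: "(real^'n::finite) set"
  assumes "U_matroid_polyhedron P" and "U_matroid_polyhedron P'"
  shows "sheared_polyhedron_of P' P \<longleftrightarrow>
         P = {x + y | x y. x \<in> P' \<and> y \<in> recession_cone P}"
proof
  assume sh: "sheared_polyhedron_of P' P"
  have sub: "P' \<subseteq> P" and ext: "\<And>v. v extreme_point_of P \<Longrightarrow> v extreme_point_of P'"
    using sh unfolding sheared_polyhedron_of_def by auto
  have polyP: "polyhedron P" and polyP': "polyhedron P'" and exv: "\<exists>v. v extreme_point_of P"
    using assms unfolding U_matroid_polyhedron_def by auto
  obtain v where v: "v extreme_point_of P" using exv by blast
  obtain C :: "((real^'n) \<times> real) set" where C: "finite C" "P = {x. \<forall>p\<in>C. fst p \<bullet> x \<le> snd p}"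
    using polyhedron_constraints[OF polyP] by blast
  have cvx: "convex P'" using polyP' by (rule polyhedron_imp_convex)
  have hullsub: "convex hull {v. v extreme_point_of P} \<subseteq> P'"
    using ext cvx by (intro hull_minimal) (auto simp: extreme_point_of_def)
  show "P = {x + y | x y. x \<in> P' \<and> y \<in> recession_cone P}"
  proof
    show "P \<subseteq> {x + y | x y. x \<in> P' \<and> y \<in> recession_cone P}"
    proof
      fix x assume xP: "x \<in> P"
      obtain c y where cy: "x = c + y" "c \<in> convex hull {v. v extreme_point_of P}"
        "\<forall>p\<in>C. fst p \<bullet> y \<le> 0"
        using decomp_lemma[OF C v xP] by blast
      have "y \<in> recession_cone P"
        unfolding recession_cone_def
      proof (intro CollectI ballI)
        fix z assume "z \<in> P"
        then have "\<forall>p\<in>C. fst p \<bullet> z \<le> snd p" using C by auto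
        then have "\<forall>p\<in>C. fst p \<bullet> (z + y) \<le> snd p" using cy(3)
          by (simp add: inner_add_right) (smt (verit))
        then show "z + y \<in> P" using C by auto
      qed
      then show "x \<in> {x + y | x y. x \<in> P' \<and> y \<in> recession_cone P}"
        using cy hullsub by blast
    qed
  next
    show "{x + y | x y. x \<in> P' \<and> y \<in> recession_cone P} \<subseteq> P"
      using sub by (auto simp: recession_cone_def)
  qed
next
  assume eq: "P = {x + y | x y. x \<in> P' \<and> y \<in> recession_cone P}"
  have z: "0 \<in> recession_cone P" by (simp add: recession_cone_def)
  have sub: "P' \<subseteq> P"
  proof
    fix x assume "x \<in> P'"
    then have "x + 0 \<in> {x + y | x y. x \<in> P' \<and> y \<in> recession_cone P}" using z by blast
    then show "x \<in> P" using eq by simp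
  qed
  have "v extreme_point_of P'" if v: "v extreme_point_of P" for v
  proof -
    have "v \<in> P" using v by (simp add: extreme_point_of_def)
    then obtain x y where xy: "v = x + y" "x \<in> P'" "y \<in> recession_cone P" using eq by blast
    have xP: "x \<in> P" using xy sub by auto
    have "x + y + y \<in> P" using xy \<open>v \<in> P\<close> unfolding recession_cone_def by blast
    have "y = 0"
    proof (rule ccontr)
      assume y0: "y \<noteq> 0"
      have h2: "x + (x + y + y) = (2::real) *\<^sub>R v" using xy(1)
        by (simp add: scaleR_2 algebra_simps)
      have "midpoint x (x + y + y) = v" unfolding midpoint_def h2 by simp
      moreover have "x \<noteq> x + y + y" using y0 by (metis add.assoc add_cancel_right_right scaleR_2 scaleR_eq_0_iff zero_neq_numeral)
      ultimately have "v \<in> open_segment x (x + y + y)" by (metis midpoint_in_open_segment)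
      then show False using v xP \<open>x + y + y \<in> P\<close> by (auto simp: extreme_point_of_def)
    qed
    then have "v \<in> P'" using xy by simp
    then show ?thesis using v sub by (auto simp: extreme_point_of_def)
  qed
  then show "sheared_polyhedron_of P' P" using sub by (simp add: sheared_polyhedron_of_def)
qed

end
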